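(* Fix integers $N\ge 1$, $t\ge 1$, $m\ge 1$. Let $A\in\{0,1\}^{N\times N}$ be an observed adjacency matrix and $X$ an $N\times d$ node feature matrix. Let $p(z)$ be a prior probability density on $\mathbb{R}^{t}$, and let $z\mapsto \tilde A_z\in[0,1]^{N\times N}$ be a deterministic decoder (with parameters $\theta$) mapping a latent graph embedding $z\in\mathbb{R}^t$ to a probabilistic adjacency matrix. Define $$p^0_\theta(A\mid \tilde A_z)=P(A\mid\tilde A_z)=\prod_{i=1}^N\prod_{j=1}^N (\tilde A_z)_{i,j}^{A_{i,j}}\bigl(1-(\tilde A_z)_{i,j}\bigr)^{1-A_{i,j}}.$$ For $u=1,\dots,m$ let $\phi_u$ be a descriptor function mapping (soft) $N\times N$ adjacency matrices to $\mathbb{R}^{l_u}$ with $l_u\ge 1$, let $F_u=\phi_u(A)\in\mathbb{R}^{l_u}$ and write $|F_u|=l_u$, and let $\sigma_u>0$. Let $\gamma\ge 0$. Define the micro-macro loss $$\mathcal{L}_\theta(A)=\mathcal{L}^0_\theta(A)+\gamma\,\mathcal{L}^1_{\theta,\sigma}(F_1,\dots,F_m),$$ where $$\mathcal{L}^0_\theta(A)=-\ln\int P(A\mid\tilde A_z)\,p(z)\,dz,\qquad \mathcal{L}^1_{\theta,\sigma}(F_1,\dots,F_m)=-\sum_{u=1}^m\frac{1}{|F_u|}\ln\int \mathcal{N}\bigl(F_u\mid \phi_u(\tilde A_z),\sigma_u^2 I\bigr)\,p(z)\,dz,$$ with $\mathcal{N}(\cdot\mid\mu,\sigma^2I)$ the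 Gaussian density with mean $\mu$ and covariance $\sigma^2 I$. Then for any approximate posterior density $q_\phi(z\mid A,X)=q(z\mid A,X,F_1,\dots,F_m)$ on $\mathbb{R}^t$ (with parameters $\phi$), $$\mathcal{L}_\theta(A)\le \mathbb{E}_{z\sim q_\phi(z\mid A,X)}\Bigl[-\ln p^0_\theta(A\mid\tilde A_z)-\gamma\sum_{u=1}^m\frac{1}{|F_u|}\ln\mathcal{N}\bigl(F_u\mid\phi_u(\tilde A_z),\sigma_u^2 I\bigr)\Bigr]+(1+\gamma m)\,\mathrm{KL}\bigl(q_\phi(z\mid A,X)\,\|\,p(z)\bigr).$$
   Context: This is a variational (ELBO-type) bound for a joint generative model of a graph: the adjacency matrix is generated edge-independently from a probabilistic adjacency matrix $\tilde A_z$ decoded from a latent graph embedding $z\sim p(z)$, and each graph statistic $F_u$ is modeled conditionally on $z$ as Gaussian with mean $\phi_u(\tilde A_z)$ and diagonal covariance $\sigma_u^2 I$. $\mathrm{KL}$ denotes Kullback–Leibler divergence. The hyperparameter $\gamma$ weights the graph-statistic (macro) loss relative to the edge (micro) loss. *)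

theory Defs
  imports "HOL-Probability.Probability"
begin

text \<open>Nodes are indexed by a finite type 'n (so N = CARD('n)); latent embeddings
live in real ^ 't (so t = CARD('t)).  Descriptor u maps a soft adjacency matrix to
a vector indexed by {..< l u}.\<close>

definition bern_lik :: "('n::finite \<Rightarrow> 'n \<Rightarrow> nat) \<Rightarrow> ('n \<Rightarrow> 'n \<Rightarrow> real) \<Rightarrow> real" where
  "bern_lik A At = (\<Prod>i\<in>UNIV. \<Prod>j\<in>UNIV. At i j ^ A i j * (1 - At i j) ^ (1 - A i j))"

definition gauss_lik :: "nat \<Rightarrow> (nat \<Rightarrow> real) \<Rightarrow> (nat \<Rightarrow> real) \<Rightarrow> real \<Rightarrow> real" where
  "gauss_lik l F mu s = (\<Prod>k<l. normal_density (mu k) s (F k))"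

definition micro_loss ::
  "('n::finite \<Rightarrow> 'n \<Rightarrow> nat) \<Rightarrow> ('z::euclidean_space \<Rightarrow> 'n \<Rightarrow> 'n \<Rightarrow> real) \<Rightarrow> ('z \<Rightarrow> real) \<Rightarrow> real" where
  "micro_loss A At p = - ln (\<integral>z. bern_lik A (At z) * p z \<partial>lborel)"

definition macro_loss ::
  "nat \<Rightarrow> (nat \<Rightarrow> nat) \<Rightarrow> (nat \<Rightarrow> ('n::finite \<Rightarrow> 'n \<Rightarrow> real) \<Rightarrow> nat \<Rightarrow> real) \<Rightarrow> (nat \<Rightarrow> real)
   \<Rightarrow> ('n \<Rightarrow> 'n \<Rightarrow> nat) \<Rightarrow> ('z::euclidean_space \<Rightarrow> 'n \<Rightarrow> 'n \<Rightarrow> real) \<Rightarrow> ('z \<Rightarrow> real) \<Rightarrow> real" where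
  "macro_loss m l phi sg A At p =
     - (\<Sum>u\<in>{1..m}. (1 / real (l u)) *
          ln (\<integral>z. gauss_lik (l u) (phi u (\<lambda>i j. real (A i j))) (phi u (At z)) (sg u) * p z \<partial>lborel))"

definition mm_loss where
  "mm_loss gamma m l phi sg A At p =
     micro_loss A At p + gamma * macro_loss m l phi sg A At p"

end

theory Submission
  imports Defs
begin

lemma elbo:
  fixes p q f :: "'a::euclidean_space \<Rightarrow> real"
  assumes p_meas: "p \<in> borel_measurable lborel" and p_nn: "\<forall>z. p z \<ge> 0"
    and p_prob: "(\<integral>\<^sup>+ z. ennreal (p z) \<partial>lborel) = 1"
    and q_meas: "q \<in> borel_measurable lborel" and q_nn: "\<forall>z. q z \<ge> 0"
    and q_prob: "(\<integral>\<^sup>+ z. ennreal (q z) \<partial>lborel) = 1"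
    and q_ac: "absolutely_continuous (density lborel (\<lambda>z. ennreal (p z))) (density lborel (\<lambda>z. ennreal (q z)))"
    and KL_int: "integrable (density lborel (\<lambda>z. ennreal (q z)))
                   (entropy_density (exp 1) (density lborel (\<lambda>z. ennreal (p z))) (density lborel (\<lambda>z. ennreal (q z))))"
    and f_meas: "f \<in> borel_measurable lborel" and f_nn: "\<forall>z. f z \<ge> 0"
    and fp_int: "integrable lborel (\<lambda>z. f z * p z)"
    and f_pos: "AE z in density lborel (\<lambda>z. ennreal (q z)). f z > 0"
    and lnf_int: "integrable (density lborel (\<lambda>z. ennreal (q z))) (\<lambda>z. ln (f z))"
  shows "- ln (\<integral>z. f z * p z \<partial>lborel) \<le> (\<integral>z. - ln (f z) \<partial>density lborel (\<lambda>z. ennreal (q z)))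
           + KL_divergence (exp 1) (density lborel (\<lambda>z. ennreal (p z))) (density lborel (\<lambda>z. ennreal (q z)))"
proof -
  let ?P = "density lborel (\<lambda>z. ennreal (p z))"
  let ?Q = "density lborel (\<lambda>z. ennreal (q z))"
  have Qprob: "prob_space ?Q"
    by (rule prob_spaceI) (use q_prob q_meas in \<open>simp add: emeasure_density\<close>)
  have Pprob: "prob_space ?P"
    by (rule prob_spaceI) (use p_prob p_meas in \<open>simp add: emeasure_density\<close>)
  interpret Q: prob_space ?Q by (rule Qprob)
  interpret P: prob_space ?P by (rule Pprob)
  have Qsp[simp]: "Q.prob UNIV = 1" using Q.prob_space by simp
  have [measurable]: "p \<in> borel_measurable lborel" "q \<in> borel_measurable lborel" "f \<in> borel_measurable lborel"
    using p_meas q_meas f_meas by auto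
  have ac: "AE x in lborel. p x = 0 \<longrightarrow> q x = 0"
  proof -
    let ?S = "{x. p x = 0}"
    have S: "?S \<in> sets lborel" by measurable
    have "emeasure ?P ?S = (\<integral>\<^sup>+x. ennreal (p x) * indicator ?S x \<partial>lborel)"
      using S by (simp add: emeasure_density)
    also have "\<dots> = (\<integral>\<^sup>+x. 0 \<partial>(lborel::'a measure))"
      by (rule nn_integral_cong) (simp split: split_indicator)
    finally have "?S \<in> null_sets ?P" using S by (simp add: null_sets_def)
    then have "?S \<in> null_sets ?Q" using q_ac unfolding absolutely_continuous_def by auto
    then have "(\<integral>\<^sup>+x. ennreal (q x) * indicator ?S x \<partial>lborel) = 0"
      using S by (simp add: emeasure_density null_sets_def)
    then have "AE x in lborel. ennreal (q x) * indicator ?S x = 0"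
      using S by (subst nn_integral_0_iff_AE[symmetric]) auto
    then show ?thesis
    proof eventually_elim
      case (elim x)
      then show ?case using q_nn[rule_format, of x]
        by (cases "p x = 0") auto
    qed
  qed
  have dd: "density ?P (\<lambda>x. ennreal (q x / p x)) = ?Q"
    using p_nn q_nn ac by (intro density_density_divide) auto
  have RNP: "AE x in ?P. ennreal (q x / p x) = RN_deriv ?P ?Q x"
    using dd by (intro P.RN_deriv_unique) auto
  have "AE x in ?Q. ennreal (q x / p x) = RN_deriv ?P ?Q x"
    by (rule absolutely_continuous_AE[OF _ q_ac RNP]) simp
  then have ent: "AE x in ?Q. entropy_density (exp 1) ?P ?Q x = ln (q x / p x)"
  proof eventually_elim
    case (elim x)
    have "q x / p x \<ge> 0" using p_nn q_nn by simp
    then show ?case using elim[symmetric] by (simp add: entropy_density_def log_def)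
  qed
  have KL: "KL_divergence (exp 1) ?P ?Q = (\<integral>z. ln (q z / p z) \<partial>?Q)"
    unfolding KL_divergence_def using ent by (intro integral_cong_AE) auto
  have lnqp_int: "integrable ?Q (\<lambda>z. ln (q z / p z))"
    using KL_int ent by (subst integrable_cong_AE[symmetric]) (auto simp: eventually_mono)
  have qpos: "AE z in ?Q. q z > 0"
    by (subst AE_density) auto
  have ppos: "AE z in ?Q. p z > 0"
    using ac p_nn by (subst AE_density) (auto elim!: eventually_mono simp: less_le)
  define c where "c = (\<integral>z. f z * p z \<partial>lborel)"
  have c_nn: "c \<ge> 0" unfolding c_def using f_nn p_nn by auto
  have c_pos: "c > 0"
  proof (rule ccontr)
    assume "\<not> c > 0"
    then have "c = 0" using c_nn by auto
    then have "AE z in lborel. f z * p z = 0"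
      unfolding c_def using fp_int f_nn p_nn by (subst integral_nonneg_eq_0_iff_AE[symmetric]) auto
    then have "AE z in ?Q. f z * p z = 0"
      by (subst AE_density) (auto elim!: eventually_mono)
    with f_pos ppos have "AE z in ?Q. False"
      by eventually_elim auto
    then show False by simp
  qed
  define h where "h z = f z * p z / q z" for z
  have h_meas[measurable]: "h \<in> borel_measurable lborel"
    unfolding h_def[abs_def] by measurable
  have qh_int: "integrable lborel (\<lambda>z. q z * h z)"
  proof (rule Bochner_Integration.integrable_bound[OF fp_int])
    show "AE z in lborel. norm (q z * h z) \<le> norm (f z * p z)"
      using f_nn p_nn q_nn by (auto simp: h_def)
  qed (auto simp: h_def)
  have h_int: "integrable ?Q h"
    using qh_int q_nn by (subst integrable_density) auto
  have "(\<integral>z. h z \<partial>?Q) = (\<integral>z. q z * h z \<partial>lborel)"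
    using q_nn by (subst integral_density) auto
  also have "\<dots> \<le> c"
    unfolding c_def using qh_int fp_int f_nn p_nn q_nn
    by (intro integral_mono) (auto simp: h_def)
  finally have hc: "(\<integral>z. h z \<partial>?Q) \<le> c" .
  have "(\<integral>z. ln (f z) - ln (q z / p z) - ln c \<partial>?Q) \<le> (\<integral>z. h z / c - 1 \<partial>?Q)"
  proof (rule integral_mono_AE)
    show "integrable ?Q (\<lambda>z. ln (f z) - ln (q z / p z) - ln c)"
      using lnf_int lnqp_int by auto
    show "integrable ?Q (\<lambda>z. h z / c - 1)"
      using h_int by auto
    show "AE z in ?Q. ln (f z) - ln (q z / p z) - ln c \<le> h z / c - 1"
      using f_pos qpos ppos
    proof eventually_elim
      case (elim z)
      have "ln (f z) - ln (q z / p z) - ln c = ln (h z / c)"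
        using elim c_pos by (simp add: h_def ln_div ln_mult)
      also have "\<dots> \<le> h z / c - 1"
        using elim c_pos by (intro ln_le_minus_one) (simp add: h_def)
      finally show ?case .
    qed
  qed
  also have "\<dots> = (\<integral>z. h z \<partial>?Q) / c - 1"
    using h_int by simp
  also have "\<dots> \<le> 0"
    using hc c_pos by (simp add: field_simps)
  finally have "(\<integral>z. ln (f z) - ln (q z / p z) - ln c \<partial>?Q) \<le> 0" .
  moreover have "(\<integral>z. ln (f z) - ln (q z / p z) - ln c \<partial>?Q)
      = (\<integral>z. ln (f z) \<partial>?Q) - (\<integral>z. ln (q z / p z) \<partial>?Q) - ln c"
    using lnf_int lnqp_int by simp
  ultimately show ?thesis
    unfolding KL c_def[symmetric] by simp
qed

theorem proposition1:
  fixes A :: "'n::finite \<Rightarrow> 'n \<Rightarrow> nat"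
    and At :: "real ^ 't \<Rightarrow> 'n \<Rightarrow> 'n \<Rightarrow> real"
    and p q :: "real ^ 't \<Rightarrow> real"
    and m :: nat and l :: "nat \<Rightarrow> nat"
    and phi :: "nat \<Rightarrow> ('n \<Rightarrow> 'n \<Rightarrow> real) \<Rightarrow> nat \<Rightarrow> real"
    and sg :: "nat \<Rightarrow> real" and gamma :: real
  assumes m_pos: "m \<ge> 1"
    and A01: "\<forall>i j. A i j \<in> {0, 1}"
    and At01: "\<forall>z i j. 0 \<le> At z i j \<and> At z i j \<le> 1"
    and At_meas: "\<forall>i j. (\<lambda>z. At z i j) \<in> borel_measurable lborel"
    and l_pos: "\<forall>u\<in>{1..m}. l u \<ge> 1"
    and phi_meas: "\<forall>u\<in>{1..m}. \<forall>k<l u. (\<lambda>z. phi u (At z) k) \<in> borel_measurable lborel"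
    and sigma_pos: "\<forall>u\<in>{1..m}. sg u > 0"
    and gamma_nn: "gamma \<ge> 0"
    and p_meas: "p \<in> borel_measurable lborel" and p_nn: "\<forall>z. p z \<ge> 0"
    and p_prob: "(\<integral>\<^sup>+ z. ennreal (p z) \<partial>lborel) = 1"
    and q_meas: "q \<in> borel_measurable lborel" and q_nn: "\<forall>z. q z \<ge> 0"
    and q_prob: "(\<integral>\<^sup>+ z. ennreal (q z) \<partial>lborel) = 1"
    and q_ac: "absolutely_continuous (density lborel (\<lambda>z. ennreal (p z))) (density lborel (\<lambda>z. ennreal (q z)))"
    and KL_int: "integrable (density lborel (\<lambda>z. ennreal (q z)))
                   (entropy_density (exp 1) (density lborel (\<lambda>z. ennreal (p z))) (density lborel (\<lambda>z. ennreal (q z))))"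
    and lik_pos: "AE z in density lborel (\<lambda>z. ennreal (q z)). bern_lik A (At z) > 0"
    and micro_int: "integrable (density lborel (\<lambda>z. ennreal (q z))) (\<lambda>z. - ln (bern_lik A (At z)))"
    and macro_int: "\<forall>u\<in>{1..m}. integrable (density lborel (\<lambda>z. ennreal (q z)))
                      (\<lambda>z. ln (gauss_lik (l u) (phi u (\<lambda>i j. real (A i j))) (phi u (At z)) (sg u)))"
  shows "mm_loss gamma m l phi sg A At p
    \<le> (\<integral>z. (- ln (bern_lik A (At z))
             - gamma * (\<Sum>u\<in>{1..m}. (1 / real (l u)) *
                 ln (gauss_lik (l u) (phi u (\<lambda>i j. real (A i j))) (phi u (At z)) (sg u))))
          \<partial>density lborel (\<lambda>z. ennreal (q z)))
      + (1 + gamma * real m) *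
        KL_divergence (exp 1) (density lborel (\<lambda>z. ennreal (p z))) (density lborel (\<lambda>z. ennreal (q z)))"
proof -
  let ?P = "density lborel (\<lambda>z. ennreal (p z))"
  let ?Q = "density lborel (\<lambda>z. ennreal (q z))"
  let ?KL = "KL_divergence (exp 1) ?P ?Q"
  let ?B = "\<lambda>z. bern_lik A (At z)"
  let ?G = "\<lambda>u z. gauss_lik (l u) (phi u (\<lambda>i j. real (A i j))) (phi u (At z)) (sg u)"
  note E = elbo[OF p_meas p_nn p_prob q_meas q_nn q_prob q_ac KL_int]
  have pint: "integrable lborel p"
    using p_meas p_nn p_prob by (intro integrableI_nonneg) auto
  have pone: "(\<integral>z. p z \<partial>lborel) = 1"
    using p_meas p_nn p_prob by (subst integral_eq_nn_integral) auto
  have KL_nn: "?KL \<ge> 0"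
    using E[of "\<lambda>_. 1"] pint pone by simp
  have Atm[measurable]: "\<And>i j. (\<lambda>z. At z i j) \<in> borel_measurable lborel"
    using At_meas by auto
  have Bm: "?B \<in> borel_measurable lborel"
    unfolding bern_lik_def by measurable
  have B01: "0 \<le> ?B z \<and> ?B z \<le> 1" for z
    unfolding bern_lik_def using At01
    by (auto intro!: prod_nonneg prod_le_1 mult_le_one power_le_one mult_nonneg_nonneg)
  have Bp_int: "integrable lborel (\<lambda>z. ?B z * p z)"
  proof (rule Bochner_Integration.integrable_bound[OF pint])
    show "AE z in lborel. norm (?B z * p z) \<le> norm (p z)"
      using B01 p_nn by (auto simp: abs_mult intro!: mult_left_le_one_le)
  qed (use Bm p_meas in auto)
  have micro: "micro_loss A At p \<le> (\<integral>z. - ln (?B z) \<partial>?Q) + ?KL"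
    unfolding micro_loss_def
    using E[of ?B] Bm B01 Bp_int lik_pos micro_int by auto
  have macro: "- ln (\<integral>z. ?G u z * p z \<partial>lborel) \<le> (\<integral>z. - ln (?G u z) \<partial>?Q) + ?KL"
    if u: "u \<in> {1..m}" for u
  proof -
    have sp: "sg u > 0" using sigma_pos u by auto
    have Gm: "?G u \<in> borel_measurable lborel"
      unfolding gauss_lik_def normal_density_def
    proof (rule borel_measurable_prod)
      fix k assume "k \<in> {..<l u}"
      then have [measurable]: "(\<lambda>z. phi u (At z) k) \<in> borel_measurable lborel"
        using phi_meas u by auto
      show "(\<lambda>z. 1 / sqrt (2 * pi * (sg u)\<^sup>2) *
              exp (- (phi u (\<lambda>i j. real (A i j)) k - phi u (At z) k)\<^sup>2 / (2 * (sg u)\<^sup>2)))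
            \<in> borel_measurable lborel" by measurable
    qed
    let ?c = "1 / sqrt (2 * pi * (sg u)\<^sup>2)"
    have nd_le: "normal_density a (sg u) x \<le> ?c" for a x
      unfolding normal_density_def using sp
      by (intro mult_left_le) auto
    have Gpos: "?G u z > 0" for z
      unfolding gauss_lik_def using sp by (intro prod_pos) (auto intro: normal_density_pos)
    have Gle: "?G u z \<le> ?c ^ l u" for z
    proof -
      have "?G u z \<le> (\<Prod>k<l u. ?c)"
        unfolding gauss_lik_def by (intro prod_mono) (auto intro: nd_le)
      then show ?thesis by simp
    qed
    have cp_int: "integrable lborel (\<lambda>z. ?c ^ l u * p z)"
      using pint by simp
    have Gpm: "(\<lambda>z. ?G u z * p z) \<in> borel_measurable lborel"
      using Gm p_meas by simp
    have Gp_int: "integrable lborel (\<lambda>z. ?G u z * p z)"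
    proof (rule Bochner_Integration.integrable_bound[OF cp_int Gpm])
      show "AE z in lborel. norm (?G u z * p z) \<le> norm (?c ^ l u * p z)"
        using Gle Gpos p_nn by (auto simp: abs_mult less_imp_le intro!: mult_right_mono)
    qed
    show ?thesis
      using E[of "?G u"] Gm Gpos Gp_int macro_int u by (auto simp: less_imp_le)
  qed
  let ?I = "\<lambda>u. (\<integral>z. ln (?G u z) \<partial>?Q)"
  have sum1: "(\<Sum>u\<in>{1..m}. (1 / real (l u)) * (- ln (\<integral>z. ?G u z * p z \<partial>lborel)))
      \<le> (\<Sum>u\<in>{1..m}. (1 / real (l u)) * (- ?I u)) + real m * ?KL"
  proof -
    have "(\<Sum>u\<in>{1..m}. (1 / real (l u)) * (- ln (\<integral>z. ?G u z * p z \<partial>lborel)))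
       \<le> (\<Sum>u\<in>{1..m}. (1 / real (l u)) * (- ?I u) + ?KL)"
    proof (rule sum_mono)
      fix u assume u: "u \<in> {1..m}"
      have lu: "real (l u) \<ge> 1" using l_pos u by auto
      have "(1 / real (l u)) * (- ln (\<integral>z. ?G u z * p z \<partial>lborel))
          \<le> (1 / real (l u)) * ((\<integral>z. - ln (?G u z) \<partial>?Q) + ?KL)"
        using macro[OF u] lu by (intro mult_left_mono) auto
      also have "\<dots> = (1 / real (l u)) * (- ?I u) + (1 / real (l u)) * ?KL"
        by (simp add: algebra_simps)
      also have "(1 / real (l u)) * ?KL \<le> ?KL"
        using KL_nn lu by (intro mult_left_le_one_le) auto
      finally show "(1 / real (l u)) * (- ln (\<integral>z. ?G u z * p z \<partial>lborel))
          \<le> (1 / real (l u)) * (- ?I u) + ?KL" by simp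
    qed
    also have "\<dots> = (\<Sum>u\<in>{1..m}. (1 / real (l u)) * (- ?I u)) + real m * ?KL"
      by (simp only: sum.distrib sum_constant card_atLeastAtMost) simp
    finally show ?thesis .
  qed
  have intsplit: "(\<integral>z. (- ln (?B z) - gamma * (\<Sum>u\<in>{1..m}. (1 / real (l u)) * ln (?G u z))) \<partial>?Q)
      = (\<integral>z. - ln (?B z) \<partial>?Q) - gamma * (\<Sum>u\<in>{1..m}. (1 / real (l u)) * ?I u)"
  proof -
    have i2: "integrable ?Q (\<lambda>z. \<Sum>u\<in>{1..m}. (1 / real (l u)) * ln (?G u z))"
      using macro_int by (intro Bochner_Integration.integrable_sum integrable_mult_right) auto
    have "(\<integral>z. (- ln (?B z) - gamma * (\<Sum>u\<in>{1..m}. (1 / real (l u)) * ln (?G u z))) \<partial>?Q)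
        = (\<integral>z. - ln (?B z) \<partial>?Q) - (\<integral>z. gamma * (\<Sum>u\<in>{1..m}. (1 / real (l u)) * ln (?G u z)) \<partial>?Q)"
      using micro_int i2 by (intro Bochner_Integration.integral_diff) auto
    also have "(\<integral>z. gamma * (\<Sum>u\<in>{1..m}. (1 / real (l u)) * ln (?G u z)) \<partial>?Q)
        = gamma * (\<integral>z. (\<Sum>u\<in>{1..m}. (1 / real (l u)) * ln (?G u z)) \<partial>?Q)"
      by simp
    also have "(\<integral>z. (\<Sum>u\<in>{1..m}. (1 / real (l u)) * ln (?G u z)) \<partial>?Q)
        = (\<Sum>u\<in>{1..m}. (\<integral>z. (1 / real (l u)) * ln (?G u z) \<partial>?Q))"
      using macro_int by (intro Bochner_Integration.integral_sum integrable_mult_right) auto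
    also have "\<dots> = (\<Sum>u\<in>{1..m}. (1 / real (l u)) * ?I u)"
      by simp
    finally show ?thesis .
  qed
  have "mm_loss gamma m l phi sg A At p
      = micro_loss A At p + gamma * (\<Sum>u\<in>{1..m}. (1 / real (l u)) * (- ln (\<integral>z. ?G u z * p z \<partial>lborel)))"
    unfolding mm_loss_def macro_loss_def by (simp add: sum_negf)
  also have "\<dots> \<le> ((\<integral>z. - ln (?B z) \<partial>?Q) + ?KL)
      + gamma * ((\<Sum>u\<in>{1..m}. (1 / real (l u)) * (- ?I u)) + real m * ?KL)"
    using micro sum1 gamma_nn by (intro add_mono mult_left_mono) auto
  also have "\<dots> = (\<integral>z. (- ln (?B z) - gamma * (\<Sum>u\<in>{1..m}. (1 / real (l u)) * ln (?G u z))) \<partial>?Q)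
      + (1 + gamma * real m) * ?KL"
    unfolding intsplit by (simp add: algebra_simps sum_negf)
  finally show ?thesis .
qed

end
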